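(* Let $\mathcal{G}$ be a finite simple graph, let $k\geq 1$, and let $\mathcal{G}^{k+1}$ be its $(k+1)$-core. Then for every $j\ge k$, every $j$-cycle of the clique complex $\widehat{\mathcal{G}}$ (i.e. every element of $\ker\partial_j$ in the simplicial chain complex $C_\bullet(\widehat{\mathcal{G}})$) is supported on simplices of $\widehat{\mathcal{G}^{k+1}}$, every $(j+1)$-simplex of $\widehat{\mathcal{G}}$ lies in $\widehat{\mathcal{G}^{k+1}}$, and consequently the inclusion $\widehat{\mathcal{G}^{k+1}}\hookrightarrow\widehat{\mathcal{G}}$ induces an isomorphism $H_j(\widehat{\mathcal{G}^{k+1}})\cong H_j(\widehat{\mathcal{G}})$.
   Context: For a graph $\mathcal{H}$, $\widehat{\mathcal{H}}$ denotes its clique (flag) complex, whose $r$-simplices are the sets of $r+1$ pairwise adjacent vertices. Homology is simplicial homology with coefficients in a fixed field. The $(k+1)$-core of $\mathcal{G}$ is the subgraph obtained by iteratively deleting vertices (with their incident edges) of degree less than $k+1$; equivalently, the largest induced subgraph in which every vertex has degree at least $k+1$. *)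

theory Defs
  imports Main
begin

definition simple_graph :: "'a set \<Rightarrow> ('a \<Rightarrow> 'a \<Rightarrow> bool) \<Rightarrow> bool" where
  "simple_graph V E \<longleftrightarrow> finite V \<and> (\<forall>u v. E u v \<longrightarrow> E v u) \<and> (\<forall>v. \<not> E v v)
     \<and> (\<forall>u v. E u v \<longrightarrow> u \<in> V \<and> v \<in> V)"

definition clique_simplices :: "'a set \<Rightarrow> ('a \<Rightarrow> 'a \<Rightarrow> bool) \<Rightarrow> nat \<Rightarrow> 'a set set" where
  "clique_simplices V E r = {\<sigma>. \<sigma> \<subseteq> V \<and> card \<sigma> = Suc r \<and>
      (\<forall>x\<in>\<sigma>. \<forall>y\<in>\<sigma>. x \<noteq> y \<longrightarrow> E x y)}"

definition min_degree_set :: "('a \<Rightarrow> 'a \<Rightarrow> bool) \<Rightarrow> nat \<Rightarrow> 'a set \<Rightarrow> bool" where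
  "min_degree_set E m W \<longleftrightarrow> (\<forall>v\<in>W. m \<le> card {u\<in>W. E v u})"

text \<open>Vertex set of the m-core: the largest vertex set inducing a subgraph of minimum
degree at least m (the union of all such sets).\<close>

definition core_vertices :: "'a set \<Rightarrow> ('a \<Rightarrow> 'a \<Rightarrow> bool) \<Rightarrow> nat \<Rightarrow> 'a set" where
  "core_vertices V E m = \<Union>{W. W \<subseteq> V \<and> min_degree_set E m W}"

definition core_edges :: "'a set \<Rightarrow> ('a \<Rightarrow> 'a \<Rightarrow> bool) \<Rightarrow> nat \<Rightarrow> 'a \<Rightarrow> 'a \<Rightarrow> bool" where
  "core_edges V E m = (\<lambda>u v. E u v \<and> u \<in> core_vertices V E m \<and> v \<in> core_vertices V E m)"

text \<open>Orientation: vertices carry a linear order, each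
simplex is oriented by the increasing order of its vertices.\<close>

definition chains :: "(nat \<Rightarrow> 'a set set) \<Rightarrow> nat \<Rightarrow> ('a set \<Rightarrow> 'k::field) set" where
  "chains S r = {c. \<forall>\<sigma>. c \<sigma> \<noteq> 0 \<longrightarrow> \<sigma> \<in> S r}"

text \<open>Incidence sign [sigma : tau] for tau = sigma minus {v}: (-1)^(position of v in sigma).\<close>

definition incidence :: "'a::linorder set \<Rightarrow> 'a set \<Rightarrow> 'k::field" where
  "incidence \<sigma> \<tau> = (-1) ^ card {u\<in>\<sigma>. u < the_elem (\<sigma> - \<tau>)}"

fun boundary :: "(nat \<Rightarrow> 'a::linorder set set) \<Rightarrow> nat \<Rightarrow> ('a set \<Rightarrow> 'k::field) \<Rightarrow> ('a set \<Rightarrow> 'k)" where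
  "boundary S 0 c = (\<lambda>\<tau>. 0)"
| "boundary S (Suc r) c = (\<lambda>\<tau>. if \<tau> \<in> S r
      then (\<Sum>\<sigma>\<in>{\<sigma>\<in>S (Suc r). \<tau> \<subseteq> \<sigma>}. incidence \<sigma> \<tau> * c \<sigma>) else 0)"

definition cycles :: "(nat \<Rightarrow> 'a::linorder set set) \<Rightarrow> nat \<Rightarrow> ('a set \<Rightarrow> 'k::field) set" where
  "cycles S r = {c \<in> chains S r. boundary S r c = (\<lambda>\<tau>. 0)}"

definition boundaries :: "(nat \<Rightarrow> 'a::linorder set set) \<Rightarrow> nat \<Rightarrow> ('a set \<Rightarrow> 'k::field) set" where
  "boundaries S r = boundary S (Suc r) ` chains S (Suc r)"

text \<open>Homology H_r = cycles / boundaries, as the set of cosets (homology classes).\<close>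

definition hom_class :: "(nat \<Rightarrow> 'a::linorder set set) \<Rightarrow> nat \<Rightarrow> ('a set \<Rightarrow> 'k::field) \<Rightarrow> ('a set \<Rightarrow> 'k) set" where
  "hom_class S r z = {z' \<in> cycles S r. (\<lambda>\<sigma>. z \<sigma> - z' \<sigma>) \<in> boundaries S r}"

definition homology :: "(nat \<Rightarrow> 'a::linorder set set) \<Rightarrow> nat \<Rightarrow> ('a set \<Rightarrow> 'k::field) set set" where
  "homology S r = hom_class S r ` cycles S r"

definition incl_induced :: "(nat \<Rightarrow> 'a::linorder set set) \<Rightarrow> (nat \<Rightarrow> 'a set set) \<Rightarrow> nat
    \<Rightarrow> ('a set \<Rightarrow> 'k::field) set \<Rightarrow> ('a set \<Rightarrow> 'k) set" where
  "incl_induced S T r X = hom_class S r (SOME z. z \<in> X)"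

end

theory Submission
  imports Defs
begin

lemma bd_sub:
  assumes "a \<in> boundaries S r" "b \<in> boundaries S r"
  shows "(\<lambda>x. a x - b x) \<in> boundaries S r"
proof -
  obtain c where c: "c \<in> chains S (Suc r)" "a = boundary S (Suc r) c"
    using assms(1) unfolding boundaries_def by auto
  obtain d where d: "d \<in> chains S (Suc r)" "b = boundary S (Suc r) d"
    using assms(2) unfolding boundaries_def by auto
  have ch: "(\<lambda>\<sigma>. c \<sigma> - d \<sigma>) \<in> chains S (Suc r)"
    unfolding chains_def mem_Collect_eq
  proof (intro allI impI)
    fix \<sigma> assume "c \<sigma> - d \<sigma> \<noteq> 0"
    then have "c \<sigma> \<noteq> 0 \<or> d \<sigma> \<noteq> 0" by auto
    then show "\<sigma> \<in> S (Suc r)" using c(1) d(1) unfolding chains_def by blast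
  qed
  have eq: "(\<lambda>x. a x - b x) = boundary S (Suc r) (\<lambda>\<sigma>. c \<sigma> - d \<sigma>)"
    unfolding c(2) d(2) by (simp add: sum_subtractf right_diff_distrib fun_eq_iff)
  show ?thesis unfolding boundaries_def by (rule image_eqI[where f="boundary S (Suc r)", OF eq ch])
qed

lemma bd_zero: "(\<lambda>x. 0) \<in> boundaries S r"
proof -
  have ch: "(\<lambda>x. 0) \<in> chains S (Suc r)" unfolding chains_def by auto
  have eq: "(\<lambda>x. 0) = boundary S (Suc r) (\<lambda>x. 0)" by auto
  show ?thesis unfolding boundaries_def by (rule image_eqI[where f="boundary S (Suc r)", OF eq ch])
qed

lemma class_eq:
  assumes "z' \<in> hom_class S r z"
  shows "hom_class S r z' = hom_class S r z"
proof -
  have zz: "(\<lambda>\<sigma>. z \<sigma> - z' \<sigma>) \<in> boundaries S r" using assms unfolding hom_class_def by blast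
  have e0: "(\<lambda>\<sigma>. z' \<sigma> - z \<sigma>) = (\<lambda>x. 0 - (z x - z' x))" by (simp add: fun_eq_iff)
  have neg: "(\<lambda>\<sigma>. z' \<sigma> - z \<sigma>) \<in> boundaries S r"
    unfolding e0 by (rule bd_sub[OF bd_zero zz])
  show ?thesis
  proof (rule set_eqI, rule iffI)
    fix y assume "y \<in> hom_class S r z'"
    then have y: "y \<in> cycles S r" "(\<lambda>\<sigma>. z' \<sigma> - y \<sigma>) \<in> boundaries S r"
      unfolding hom_class_def by blast+
    have e1: "(\<lambda>\<sigma>. z \<sigma> - y \<sigma>) = (\<lambda>x. (z' x - y x) - (z' x - z x))" by (simp add: fun_eq_iff)
    have "(\<lambda>\<sigma>. z \<sigma> - y \<sigma>) \<in> boundaries S r" unfolding e1 by (rule bd_sub[OF y(2) neg])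
    then show "y \<in> hom_class S r z" using y(1) unfolding hom_class_def by blast
  next
    fix y assume "y \<in> hom_class S r z"
    then have y: "y \<in> cycles S r" "(\<lambda>\<sigma>. z \<sigma> - y \<sigma>) \<in> boundaries S r"
      unfolding hom_class_def by blast+
    have e1: "(\<lambda>\<sigma>. z' \<sigma> - y \<sigma>) = (\<lambda>x. (z x - y x) - (z x - z' x))" by (simp add: fun_eq_iff)
    have "(\<lambda>\<sigma>. z' \<sigma> - y \<sigma>) \<in> boundaries S r" unfolding e1 by (rule bd_sub[OF y(2) zz])
    then show "y \<in> hom_class S r z'" using y(1) unfolding hom_class_def by blast
  qed
qed

lemma self_class: "z \<in> cycles S r \<Longrightarrow> z \<in> hom_class S r z"
  unfolding hom_class_def using bd_zero by auto

lemma bd_eq: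
  assumes sub: "\<And>r. T r \<subseteq> S r"
    and down: "\<And>r r' \<tau> \<sigma>. \<tau> \<in> S r \<Longrightarrow> \<sigma> \<in> T r' \<Longrightarrow> \<tau> \<subseteq> \<sigma> \<Longrightarrow> \<tau> \<in> T r"
    and fin: "finite (S (Suc r))" and c: "c \<in> chains T (Suc r)"
  shows "boundary S (Suc r) c = boundary T (Suc r) c"
proof
  fix \<tau>
  show "boundary S (Suc r) c \<tau> = boundary T (Suc r) c \<tau>"
  proof (cases "\<tau> \<in> T r")
    case True
    then have "\<tau> \<in> S r" using sub by auto
    have "(\<Sum>\<sigma>\<in>{\<sigma>\<in>S (Suc r). \<tau> \<subseteq> \<sigma>}. incidence \<sigma> \<tau> * c \<sigma>)
        = (\<Sum>\<sigma>\<in>{\<sigma>\<in>T (Suc r). \<tau> \<subseteq> \<sigma>}. incidence \<sigma> \<tau> * c \<sigma>)"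
      by (rule sum.mono_neutral_right) (use fin sub c in \<open>auto simp: chains_def\<close>)
    then show ?thesis using True \<open>\<tau> \<in> S r\<close> by simp
  next
    case False
    have "boundary S (Suc r) c \<tau> = 0"
    proof (cases "\<tau> \<in> S r")
      case True
      have "(\<Sum>\<sigma>\<in>{\<sigma>\<in>S (Suc r). \<tau> \<subseteq> \<sigma>}. incidence \<sigma> \<tau> * c \<sigma>) = 0"
      proof (rule sum.neutral, clarify)
        fix \<sigma> assume "\<sigma> \<in> S (Suc r)" "\<tau> \<subseteq> \<sigma>"
        show "incidence \<sigma> \<tau> * c \<sigma> = 0"
        proof (cases "c \<sigma> = 0")
          case False
          then have "\<sigma> \<in> T (Suc r)" using c by (auto simp: chains_def)
          then have "\<tau> \<in> T r" using down[OF True _ \<open>\<tau> \<subseteq> \<sigma>\<close>] by blast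
          then show ?thesis using \<open>\<tau> \<notin> T r\<close> by blast
        qed simp
      qed
      then show ?thesis using True by simp
    qed simp
    then show ?thesis using False by simp
  qed
qed

lemma core_intro: "W \<subseteq> V \<Longrightarrow> min_degree_set E m W \<Longrightarrow> W \<subseteq> core_vertices V E m"
  unfolding core_vertices_def by auto

lemma core_sub: "core_vertices V E m \<subseteq> V"
  unfolding core_vertices_def by auto

theorem mainTheorem2:
  fixes V :: "'a::linorder set" and E :: "'a \<Rightarrow> 'a \<Rightarrow> bool" and k j :: nat
  assumes "simple_graph V E" and "1 \<le> k" and "k \<le> j"
  shows "(\<forall>c::('a set \<Rightarrow> 'k::field). c \<in> cycles (clique_simplices V E) j \<longrightarrow>
            (\<forall>\<sigma>. c \<sigma> \<noteq> 0 \<longrightarrow>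
               \<sigma> \<in> clique_simplices (core_vertices V E (k+1)) (core_edges V E (k+1)) j))
       \<and> clique_simplices V E (Suc j)
           \<subseteq> clique_simplices (core_vertices V E (k+1)) (core_edges V E (k+1)) (Suc j)
       \<and> bij_betw
           (incl_induced (clique_simplices V E)
              (clique_simplices (core_vertices V E (k+1)) (core_edges V E (k+1))) j)
           (homology (clique_simplices (core_vertices V E (k+1)) (core_edges V E (k+1))) j
              :: ('a set \<Rightarrow> 'k) set set)
           (homology (clique_simplices V E) j)"
proof -
  define C where "C = core_vertices V E (k+1)"
  define EC where "EC = core_edges V E (k+1)"
  define S where "S = clique_simplices V E"
  define T where "T = clique_simplices C EC"
  have finV: "finite V" using assms(1) unfolding simple_graph_def by auto
  have CV: "C \<subseteq> V" unfolding C_def by (rule core_sub)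
  have finS: "\<And>r. finite (S r)"
    by (rule finite_subset[of _ "Pow V"]) (auto simp: S_def clique_simplices_def finV)
  have sub: "\<And>r. T r \<subseteq> S r"
    using CV by (auto simp: T_def S_def clique_simplices_def EC_def core_edges_def C_def)
  have inT: "\<And>r \<sigma>. \<sigma> \<in> S r \<Longrightarrow> \<sigma> \<subseteq> C \<Longrightarrow> \<sigma> \<in> T r"
    by (auto simp: T_def S_def clique_simplices_def EC_def core_edges_def C_def)
  have down: "\<And>r r' \<tau> \<sigma>. \<tau> \<in> S r \<Longrightarrow> \<sigma> \<in> T r' \<Longrightarrow> \<tau> \<subseteq> \<sigma> \<Longrightarrow> \<tau> \<in> T r"
    using inT by (auto simp: T_def clique_simplices_def)
  have claim2: "S (Suc j) \<subseteq> T (Suc j)"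
  proof
    fix \<sigma> assume s: "\<sigma> \<in> S (Suc j)"
    then have cs: "card \<sigma> = Suc (Suc j)" and sV: "\<sigma> \<subseteq> V"
      and cl: "\<forall>x\<in>\<sigma>. \<forall>y\<in>\<sigma>. x \<noteq> y \<longrightarrow> E x y"
      by (auto simp: S_def clique_simplices_def)
    have fs: "finite \<sigma>" using cs card.infinite by fastforce
    have "min_degree_set E (k+1) \<sigma>"
      unfolding min_degree_set_def
    proof
      fix v assume v: "v \<in> \<sigma>"
      have "\<sigma> - {v} \<subseteq> {u\<in>\<sigma>. E v u}" using cl v by auto
      then have "card (\<sigma> - {v}) \<le> card {u\<in>\<sigma>. E v u}" using fs by (intro card_mono) auto
      moreover have "card (\<sigma> - {v}) = Suc j" using cs v fs by simp
      ultimately show "k + 1 \<le> card {u\<in>\<sigma>. E v u}" using assms(3) by simp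
    qed
    then have "\<sigma> \<subseteq> C" unfolding C_def using sV by (rule core_intro[rotated])
    then show "\<sigma> \<in> T (Suc j)" using inT s by auto
  qed
  obtain r where jr: "j = Suc r" using assms(2,3) by (cases j) auto
  have claim1: "\<And>c::('a set \<Rightarrow> 'k). c \<in> cycles S j \<Longrightarrow> \<forall>\<sigma>. c \<sigma> \<noteq> 0 \<longrightarrow> \<sigma> \<in> T j"
  proof (intro allI impI)
    fix c :: "'a set \<Rightarrow> 'k" and \<sigma>0
    assume cyc: "c \<in> cycles S j" and c0: "c \<sigma>0 \<noteq> 0"
    have ch: "\<And>\<sigma>. c \<sigma> \<noteq> 0 \<Longrightarrow> \<sigma> \<in> S j" using cyc by (auto simp: cycles_def chains_def)
    have bd0: "boundary S (Suc r) c = (\<lambda>\<tau>. 0)" using cyc jr by (auto simp: cycles_def)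
    define W where "W = \<Union>{\<sigma>. c \<sigma> \<noteq> 0}"
    have WV: "W \<subseteq> V" using ch by (auto simp: W_def S_def clique_simplices_def)
    have finW: "finite W" using WV finV finite_subset by auto
    have "min_degree_set E (k+1) W"
      unfolding min_degree_set_def
    proof
      fix v assume "v \<in> W"
      then obtain \<sigma> where cs0: "c \<sigma> \<noteq> 0" and v: "v \<in> \<sigma>" by (auto simp: W_def)
      have sS: "\<sigma> \<in> S j" using ch cs0 .
      then have cs: "card \<sigma> = Suc j" and sV: "\<sigma> \<subseteq> V"
        and cl: "\<forall>x\<in>\<sigma>. \<forall>y\<in>\<sigma>. x \<noteq> y \<longrightarrow> E x y"
        by (auto simp: S_def clique_simplices_def)
      have fs: "finite \<sigma>" using cs card.infinite by fastforce
      have "card (\<sigma> - {v}) = j" using cs v fs by simp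
      then have "card (\<sigma> - {v}) \<noteq> 0" using jr by simp
      then have "\<sigma> - {v} \<noteq> {}" by (metis card.empty)
      then obtain w where w: "w \<in> \<sigma>" "w \<noteq> v" by auto
      define \<tau> where "\<tau> = \<sigma> - {w}"
      have ct: "card \<tau> = Suc r" using cs w fs jr by (simp add: \<tau>_def)
      have tS: "\<tau> \<in> S r" using sS ct by (auto simp: S_def clique_simplices_def \<tau>_def)
      define A where "A = {\<sigma>'\<in>S (Suc r). \<tau> \<subseteq> \<sigma>'}"
      have finA: "finite A" using finS by (auto simp: A_def)
      have sA: "\<sigma> \<in> A" using sS jr by (auto simp: A_def \<tau>_def)
      have "\<exists>\<sigma>'\<in>A - {\<sigma>}. c \<sigma>' \<noteq> 0"
      proof (rule ccontr)
        assume "\<not> ?thesis"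
        then have z: "\<forall>\<sigma>'\<in>A - {\<sigma>}. c \<sigma>' = 0" by auto
        have "(\<Sum>\<sigma>'\<in>A. incidence \<sigma>' \<tau> * c \<sigma>') = incidence \<sigma> \<tau> * c \<sigma> + (\<Sum>\<sigma>'\<in>A - {\<sigma>}. incidence \<sigma>' \<tau> * c \<sigma>')"
          using finA sA by (rule sum.remove)
        also have "(\<Sum>\<sigma>'\<in>A - {\<sigma>}. incidence \<sigma>' \<tau> * c \<sigma>') = 0" using z by auto
        finally have "(\<Sum>\<sigma>'\<in>A. incidence \<sigma>' \<tau> * c \<sigma>') = incidence \<sigma> \<tau> * c \<sigma>" by simp
        moreover have "(\<Sum>\<sigma>'\<in>A. incidence \<sigma>' \<tau> * c \<sigma>') = 0"
          using fun_cong[OF bd0, of \<tau>] tS by (simp add: A_def)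
        moreover have "(incidence \<sigma> \<tau> :: 'k) \<noteq> 0" by (simp add: incidence_def)
        ultimately show False using cs0 by simp
      qed
      then obtain \<sigma>' where s'A: "\<sigma>' \<in> A" and s'ne: "\<sigma>' \<noteq> \<sigma>" and cs': "c \<sigma>' \<noteq> 0" by auto
      have ts': "\<tau> \<subseteq> \<sigma>'" and c'card: "card \<sigma>' = Suc j"
        and cl': "\<forall>x\<in>\<sigma>'. \<forall>y\<in>\<sigma>'. x \<noteq> y \<longrightarrow> E x y"
        using s'A jr by (auto simp: A_def S_def clique_simplices_def)
      have fs': "finite \<sigma>'" using c'card card.infinite by fastforce
      have "\<sigma>' - \<tau> \<noteq> {}"
      proof
        assume "\<sigma>' - \<tau> = {}"
        then have "\<sigma>' \<subseteq> \<tau>" by auto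
        then have "card \<sigma>' \<le> card \<tau>" using fs by (intro card_mono) (auto simp: \<tau>_def)
        then show False using c'card ct jr by simp
      qed
      then obtain w' where w': "w' \<in> \<sigma>'" "w' \<notin> \<tau>" by auto
      have w'ns: "w' \<notin> \<sigma>"
      proof
        assume "w' \<in> \<sigma>"
        then have "w' = w" using w' by (auto simp: \<tau>_def)
        then have "\<sigma> \<subseteq> \<sigma>'" using ts' w' by (auto simp: \<tau>_def)
        then have "\<sigma> = \<sigma>'" using fs' c'card cs by (metis card_subset_eq)
        then show False using s'ne by simp
      qed
      have vt: "v \<in> \<tau>" using v w by (auto simp: \<tau>_def)
      have Evw': "E v w'" using cl' vt ts' w' by auto
      have w'W: "w' \<in> W" using cs' w' by (auto simp: W_def)
      have sW: "\<sigma> \<subseteq> W" using cs0 by (auto simp: W_def)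
      have "insert w' (\<sigma> - {v}) \<subseteq> {u\<in>W. E v u}" using cl v sW w'W Evw' by auto
      then have "card (insert w' (\<sigma> - {v})) \<le> card {u\<in>W. E v u}" using finW by (intro card_mono) auto
      moreover have "card (insert w' (\<sigma> - {v})) = Suc j" using fs w'ns cs v by simp
      ultimately show "k + 1 \<le> card {u\<in>W. E v u}" using assms(3) by simp
    qed
    then have "W \<subseteq> C" unfolding C_def using WV by (rule core_intro[rotated])
    moreover have "\<sigma>0 \<subseteq> W" using c0 by (auto simp: W_def)
    ultimately show "\<sigma>0 \<in> T j" using inT ch c0 by auto
  qed
  have cyc_eq: "cycles T j = (cycles S j :: ('a set \<Rightarrow> 'k) set)"
  proof (rule set_eqI, rule iffI)
    fix c :: "'a set \<Rightarrow> 'k" assume "c \<in> cycles T j"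
    then have c: "c \<in> chains T (Suc r)" "boundary T (Suc r) c = (\<lambda>\<tau>. 0)" using jr by (auto simp: cycles_def)
    have "boundary S (Suc r) c = boundary T (Suc r) c" using bd_eq[OF sub down finS c(1)] .
    moreover have "c \<in> chains S (Suc r)" using c(1) sub by (auto simp: chains_def)
    ultimately show "c \<in> cycles S j" using c(2) jr by (auto simp: cycles_def)
  next
    fix c :: "'a set \<Rightarrow> 'k" assume cS: "c \<in> cycles S j"
    then have c: "c \<in> chains T (Suc r)" using claim1 jr by (auto simp: chains_def)
    have "boundary S (Suc r) c = boundary T (Suc r) c" using bd_eq[OF sub down finS c] .
    then show "c \<in> cycles T j" using cS c jr by (auto simp: cycles_def)
  qed
  have TS: "T (Suc j) = S (Suc j)" using claim2 sub by auto
  have chS: "chains T (Suc j) = (chains S (Suc j) :: ('a set \<Rightarrow> 'k) set)"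
    unfolding chains_def TS ..
  have bds_eq: "boundaries T j = (boundaries S j :: ('a set \<Rightarrow> 'k) set)"
    unfolding boundaries_def chS[symmetric]
  proof (rule image_cong[OF refl])
    fix x :: "'a set \<Rightarrow> 'k" assume "x \<in> chains T (Suc j)"
    then have xc: "x \<in> chains T (Suc j)" .
    have "boundary S (Suc j) x = boundary T (Suc j) x" by (rule bd_eq[OF sub down finS xc])
    then show "boundary T (Suc j) x = boundary S (Suc j) x" by simp
  qed
  have hc: "hom_class T j = (hom_class S j :: ('a set \<Rightarrow> 'k) \<Rightarrow> _)"
    by (rule ext) (simp add: hom_class_def cyc_eq bds_eq)
  have hom_eq: "homology T j = (homology S j :: ('a set \<Rightarrow> 'k) set set)"
    unfolding homology_def hc cyc_eq ..
  have incl: "\<And>X. X \<in> homology S j \<Longrightarrow> incl_induced S T j X = (X :: ('a set \<Rightarrow> 'k) set)"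
  proof -
    fix X :: "('a set \<Rightarrow> 'k) set" assume "X \<in> homology S j"
    then obtain z where z: "z \<in> cycles S j" "X = hom_class S j z" by (auto simp: homology_def)
    then have "z \<in> X" using self_class by auto
    then have "(SOME z. z \<in> X) \<in> X" by (metis someI)
    then have "hom_class S j (SOME z. z \<in> X) = hom_class S j z" unfolding z(2) by (rule class_eq)
    then show "incl_induced S T j X = X" unfolding incl_induced_def using z(2) by simp
  qed
  have bij: "bij_betw (incl_induced S T j) (homology T j :: ('a set \<Rightarrow> 'k) set set) (homology S j)"
    unfolding hom_eq using bij_betw_cong[of "homology S j" "incl_induced S T j" id] incl by auto
  show ?thesis
    using claim1 claim2 bij
    unfolding S_def[symmetric] T_def[symmetric] C_def[symmetric] EC_def[symmetric]
    by (simp add: T_def S_def)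
qed

end
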